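(* Let $P_{\mathcal{F}}$ be the probability measure on $\mathscr{P}(2^\omega)$ which is the distribution of $\lambda\circ F_x^{-1}$ when $x\in3^\omega$ is drawn according to $\lambda_3$. Then $P_{\mathcal{F}}$ has barycenter $\lambda$, i.e. for every $\sigma\in2^{<\omega}$, $$\lambda(\llbracket\sigma\rrbracket)=\int_{\mathscr{P}(2^\omega)}\mu(\llbracket\sigma\rrbracket)\,dP_{\mathcal{F}}(\mu),$$ equivalently $\int_{3^\omega}\lambda(F_x^{-1}(\llbracket\sigma\rrbracket))\,d\lambda_3(x)=2^{-|\sigma|}$.
   Context: $\lambda$ is the uniform measure on $2^\omega$ and $\lambda_3$ the uniform measure on $3^\omega$ ($\lambda_3(\llbracket\sigma\rrbracket)=3^{-|\sigma|}$). Let $\sigma_0=\epsilon,\sigma_1=0,\sigma_2=1,\dots$ be the length-lexicographic enumeration of $2^{<\omega}$. For $x\in3^\omega$ label node $\sigma_i$ ($i\ge1$) by $\ell_x(\sigma_i)=x(i-1)$, and let $F_x(y)$ be the sequence obtained from $\ell_x(y\restriction1),\ell_x(y\restriction2),\dots$ by deleting all $2$'s (undefined if only finitely many entries remain). For $\lambda_3$-almost every $x$, $F_x$ is total, so $\lambda\circ F_x^{-1}$ is a Borel probability measure on $2^\omega$. *)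

theory Defs
  imports "HOL-Probability.Probability"
begin

text \<open>Cantor space 2^omega and 3^omega are modelled as nat => nat (digits as naturals).
  lam = uniform (fair coin) measure on {0,1}^omega, lam3 = uniform measure on {0,1,2}^omega.\<close>

definition lam :: "(nat \<Rightarrow> nat) measure" where
  "lam = PiM UNIV (\<lambda>_. measure_pmf (pmf_of_set {0, 1 :: nat}))"

definition lam3 :: "(nat \<Rightarrow> nat) measure" where
  "lam3 = PiM UNIV (\<lambda>_. measure_pmf (pmf_of_set {0, 1, 2 :: nat}))"

definition cyl :: "nat list \<Rightarrow> (nat \<Rightarrow> nat) set" where
  "cyl \<sigma> = {y. \<forall>i < length \<sigma>. y i = \<sigma> ! i}"

definition restr :: "(nat \<Rightarrow> nat) \<Rightarrow> nat \<Rightarrow> nat list" where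
  "restr y n = map y [0..<n]"

text \<open>Position of a binary string in the length-lexicographic enumeration
  sigma_0 = [], sigma_1 = [0], sigma_2 = [1], sigma_3 = [0,0], ...
  i.e. sigma_i = tau iff lenlex_index tau = i.\<close>
definition lenlex_index :: "nat list \<Rightarrow> nat" where
  "lenlex_index \<tau> = 2 ^ length \<tau> - 1 + foldl (\<lambda>a b. 2 * a + b) 0 \<tau>"

text \<open>Label of node tau (nonempty) determined by x: l_x(sigma_i) = x(i-1).\<close>
definition label :: "(nat \<Rightarrow> nat) \<Rightarrow> nat list \<Rightarrow> nat" where
  "label x \<tau> = x (lenlex_index \<tau> - 1)"

definition label_seq :: "(nat \<Rightarrow> nat) \<Rightarrow> (nat \<Rightarrow> nat) \<Rightarrow> nat \<Rightarrow> nat" where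
  "label_seq x y n = label x (restr y (Suc n))"

text \<open>F_x(y): delete all 2's from label_seq; undefined (None) if only finitely many entries remain.\<close>
definition F :: "(nat \<Rightarrow> nat) \<Rightarrow> (nat \<Rightarrow> nat) \<Rightarrow> (nat \<Rightarrow> nat) option" where
  "F x y = (let N = {n. label_seq x y n \<noteq> 2} in
     if infinite N then Some (\<lambda>k. label_seq x y (enumerate N k)) else None)"

definition F_preimage :: "(nat \<Rightarrow> nat) \<Rightarrow> (nat \<Rightarrow> nat) set \<Rightarrow> (nat \<Rightarrow> nat) set" where
  "F_preimage x A = {y \<in> space lam. \<exists>z \<in> A. F x y = Some z}"

end

theory Submission
  imports Defs
begin


definition filt :: "(nat \<Rightarrow> nat) \<Rightarrow> nat \<Rightarrow> nat list" where
  "filt w m = filter (\<lambda>v. v \<noteq> 2) (map w [0..<m])"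

lemma filt_add: "filt w (m + d) = filt w m @ filter (\<lambda>v. v \<noteq> 2) (map w [m..<m+d])"
  unfolding filt_def using upt_add_eq_append[of 0 m d] by simp

lemma filt_mono: "m \<le> m' \<Longrightarrow> \<exists>r. filt w m' = filt w m @ r"
  using filt_add[of w m "m' - m"] by auto

lemma filt_nil: "(\<And>i. i < m \<Longrightarrow> w i = 2) \<Longrightarrow> filt w m = []"
  unfolding filt_def filter_empty_conv by auto

lemma filt_enum:
  assumes inf: "infinite {n. w n \<noteq> 2}"
  shows "filt w (enumerate {n. w n \<noteq> 2} k) = map (\<lambda>i. w (enumerate {n. w n \<noteq> 2} i)) [0..<k]"
proof (induction k)
  case 0
  let ?N = "{n. w n \<noteq> 2}"
  have "filt w (LEAST n. n \<in> ?N) = []"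
  proof (rule filt_nil)
    fix i assume "i < (LEAST n. n \<in> ?N)"
    then have "i \<notin> ?N" by (rule not_less_Least)
    then show "w i = 2" by simp
  qed
  then show ?case by (simp only: enumerate_0 upt_0 list.map(1))
next
  case (Suc k)
  let ?N = "{n. w n \<noteq> 2}"
  let ?a = "enumerate ?N k" and ?b = "enumerate ?N (Suc k)"
  have ab: "?a < ?b" using enumerate_step[OF inf] .
  have aN: "w ?a \<noteq> 2" using enumerate_in_set[OF inf, of k] by simp
  have bdef: "?b = (LEAST s. s \<in> ?N \<and> ?a < s)" using enumerate_Suc''[OF inf] .
  have btw: "w i = 2" if "?a < i" "i < ?b" for i
  proof (rule ccontr)
    assume "w i \<noteq> 2"
    then have "i \<in> ?N \<and> ?a < i" using that by simp
    then have "(LEAST s. s \<in> ?N \<and> ?a < s) \<le> i" by (rule Least_le)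
    then show False using that bdef by simp
  qed
  have e1: "filt w ?b = filt w ?a @ filter (\<lambda>v. v \<noteq> 2) (map w [?a..<?b])"
    using filt_add[of w ?a "?b - ?a"] ab by simp
  have e2: "[?a..<?b] = ?a # [Suc ?a..<?b]" using ab upt_conv_Cons by blast
  have e3: "filter (\<lambda>v. v \<noteq> 2) (map w [Suc ?a..<?b]) = []"
    unfolding filter_empty_conv using btw by auto
  have "filt w ?b = filt w ?a @ [w ?a]"
    using e1 e2 e3 aN by simp
  also have "\<dots> = map (\<lambda>i. w (enumerate ?N i)) [0..<Suc k]"
    using Suc.IH by simp
  finally show ?case .
qed

lemma filt_same_len:
  assumes "length (filt w m) = length (filt w m')"
  shows "filt w m = filt w m'"
proof (cases "m \<le> m'")
  case True then obtain r where "filt w m' = filt w m @ r" using filt_mono by blast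
  with assms show ?thesis by simp
next
  case False then obtain r where "filt w m = filt w m' @ r" using filt_mono[of m' m] by auto
  with assms show ?thesis by simp
qed

definition Eset :: "nat list \<Rightarrow> (nat \<Rightarrow> nat) set" where
  "Eset \<sigma> = {w. \<exists>m. filt w m = \<sigma>}"

definition Infs :: "(nat \<Rightarrow> nat) set" where
  "Infs = {w. \<forall>N. \<exists>n\<ge>N. w n \<noteq> 2}"

lemma Infs_iff: "w \<in> Infs \<longleftrightarrow> infinite {n. w n \<noteq> 2}"
  unfolding Infs_def infinite_nat_iff_unbounded_le by auto

lemma F_char:
  "(\<exists>z\<in>cyl \<sigma>. F x y = Some z) \<longleftrightarrow> label_seq x y \<in> Eset \<sigma> \<inter> Infs"
proof -
  define w where "w = label_seq x y"
  define N where "N = {n. w n \<noteq> 2}"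
  show ?thesis
  proof (cases "infinite N")
    case False
    then have "F x y = None" unfolding F_def Let_def w_def[symmetric] N_def[symmetric] by simp
    moreover have "w \<notin> Infs" using False unfolding Infs_iff N_def .
    ultimately show ?thesis unfolding w_def by simp
  next
    case True
    let ?z = "\<lambda>k. w (enumerate N k)"
    have FS: "F x y = Some ?z" using True unfolding F_def Let_def w_def[symmetric] N_def[symmetric] by simp
    have fe: "filt w (enumerate N k) = map ?z [0..<k]" for k
      using filt_enum[of w k] True unfolding N_def by simp
    have "?z \<in> cyl \<sigma> \<longleftrightarrow> w \<in> Eset \<sigma>"
    proof
      assume "?z \<in> cyl \<sigma>"
      then have "map ?z [0..<length \<sigma>] = \<sigma>" by (auto simp: cyl_def intro: nth_equalityI)
      then have "filt w (enumerate N (length \<sigma>)) = \<sigma>" using fe by simp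
      then show "w \<in> Eset \<sigma>" unfolding Eset_def by blast
    next
      assume "w \<in> Eset \<sigma>"
      then obtain m where m: "filt w m = \<sigma>" unfolding Eset_def by blast
      have "filt w m = filt w (enumerate N (length \<sigma>))"
        by (rule filt_same_len) (simp add: m fe)
      then have eq: "map ?z [0..<length \<sigma>] = \<sigma>" using m fe by simp
      have "?z i = \<sigma> ! i" if i: "i < length \<sigma>" for i
      proof -
        have "\<sigma> ! i = map ?z [0..<length \<sigma>] ! i" using eq by simp
        also have "\<dots> = ?z i" using i by simp
        finally show ?thesis by simp
      qed
      then show "?z \<in> cyl \<sigma>" unfolding cyl_def by blast
    qed
    then have c1: "(\<exists>z\<in>cyl \<sigma>. F x y = Some z) \<longleftrightarrow> w \<in> Eset \<sigma>" using FS by auto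
    have "w \<in> Infs" using True unfolding Infs_iff N_def .
    then show ?thesis using c1 unfolding w_def by blast
  qed
qed



abbreviation "M3 \<equiv> measure_pmf (pmf_of_set {0, 1, 2 :: nat})"

lemma sets_lam3: "sets lam3 = sets (PiM UNIV (\<lambda>_. count_space (UNIV::nat set)))"
  unfolding lam3_def by (rule sets_PiM_cong) simp_all

lemma space_lam3[simp]: "space lam3 = UNIV"
  by (simp add: lam3_def space_PiM)

lemma prob_lam3: "prob_space lam3"
  unfolding lam3_def by (intro prob_space_PiM) (simp add: prob_space_measure_pmf)

lemma SS3: "sequence_space M3"
  unfolding sequence_space_def product_prob_space_def product_prob_space_axioms_def product_sigma_finite_def
  by (intro conjI allI prob_space_measure_pmf prob_space_imp_sigma_finite)

lemma lam3_iter: "distr (M3 \<Otimes>\<^sub>M lam3) lam3 (\<lambda>(s, \<omega>). case_nat s \<omega>) = lam3"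
  unfolding lam3_def by (rule sequence_space.PiM_iter[OF SS3])

lemma meas_case_nat: "(\<lambda>(s, \<omega>). case_nat s \<omega>) \<in> measurable (M3 \<Otimes>\<^sub>M lam3) lam3"
  unfolding lam3_def by measurable



lemma em3: "emeasure lam3 A = ennreal (measure lam3 A)"
proof -
  interpret L: prob_space lam3 by (rule prob_lam3)
  show ?thesis by (rule L.emeasure_eq_measure)
qed

lemma sf_lam3: "sigma_finite_measure lam3"
  using prob_lam3 by (rule prob_space_imp_sigma_finite)

lemma meas_case_nat_s: "(\<lambda>\<omega>. case_nat s \<omega>) \<in> measurable lam3 lam3"
  unfolding lam3_def by measurable

lemma lam3_step:
  assumes B: "B \<in> sets lam3"
  shows "measure lam3 B = (\<Sum>s\<in>{0,1,2::nat}. measure lam3 ((\<lambda>\<omega>. case_nat s \<omega>) -` B)) / 3"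
proof -
  let ?f = "\<lambda>(s, \<omega>). case_nat s \<omega>"
  have mB: "(\<lambda>\<omega>. case_nat s \<omega>) -` B \<in> sets lam3" for s
    using measurable_sets[OF meas_case_nat_s B, of s] by simp
  have S: "?f -` B \<inter> space (M3 \<Otimes>\<^sub>M lam3) \<in> sets (M3 \<Otimes>\<^sub>M lam3)"
    using measurable_sets[OF meas_case_nat B] .
  have "emeasure lam3 B = emeasure (distr (M3 \<Otimes>\<^sub>M lam3) lam3 ?f) B" using lam3_iter by simp
  also have "\<dots> = emeasure (M3 \<Otimes>\<^sub>M lam3) (?f -` B \<inter> space (M3 \<Otimes>\<^sub>M lam3))"
    by (rule emeasure_distr[OF meas_case_nat B])
  also have "\<dots> = (\<integral>\<^sup>+s. emeasure lam3 (Pair s -` (?f -` B \<inter> space (M3 \<Otimes>\<^sub>M lam3))) \<partial>M3)"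
    by (rule sigma_finite_measure.emeasure_pair_measure_alt[OF sf_lam3 S])
  also have "\<dots> = (\<integral>\<^sup>+s. emeasure lam3 ((\<lambda>\<omega>. case_nat s \<omega>) -` B) \<partial>M3)"
    by (intro nn_integral_cong arg_cong[where f="emeasure lam3"]) (auto simp: space_pair_measure)
  also have "\<dots> = (\<Sum>s\<in>{0,1,2::nat}. emeasure lam3 ((\<lambda>\<omega>. case_nat s \<omega>) -` B)) / 3"
    by (subst nn_integral_pmf_of_set) auto
  also have "\<dots> = ennreal ((\<Sum>s\<in>{0,1,2::nat}. measure lam3 ((\<lambda>\<omega>. case_nat s \<omega>) -` B)) / 3)"
    by (simp add: em3 sum_ennreal divide_ennreal[symmetric] sum_nonneg)
  finally show ?thesis
    by (simp add: em3 sum_nonneg)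
qed



lemma single_sets: "{w. w i = c} \<in> sets lam3"
proof -
  have "{x \<in> space lam3. x i \<in> {c}} \<in> sets lam3"
    unfolding lam3_def by (rule sets_Collect_single) auto
  then show ?thesis by simp
qed

lemma prefix_sets: "{w. \<forall>i<m. w i = l i} \<in> sets lam3"
proof (induction m)
  case 0 then show ?case using sets.top[of lam3] by simp
next
  case (Suc m)
  have "{w. \<forall>i<Suc m. w i = l i} = {w. \<forall>i<m. w i = l i} \<inter> {w. w m = l m}"
    by (auto simp: less_Suc_eq)
  then show ?case using Suc single_sets by simp
qed

lemma map_upt_eq_iff: "map w [0..<m] = l \<longleftrightarrow> length l = m \<and> (\<forall>i<m. w i = l ! i)"
proof
  assume "map w [0..<m] = l"
  then show "length l = m \<and> (\<forall>i<m. w i = l ! i)" by auto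
next
  assume a: "length l = m \<and> (\<forall>i<m. w i = l ! i)"
  show "map w [0..<m] = l"
  proof (rule nth_equalityI)
    show "length (map w [0..<m]) = length l" using a by simp
    fix i assume "i < length (map w [0..<m])"
    then show "map w [0..<m] ! i = l ! i" using a by simp
  qed
qed

lemma meas_prefix: "(\<lambda>w. map w [0..<m]) \<in> measurable lam3 (count_space UNIV)"
proof (rule measurable_count_space_eq2_countable[THEN iffD2], intro conjI ballI)
  fix l :: "nat list"
  have "(\<lambda>w. map w [0..<m]) -` {l} \<inter> space lam3 =
    (if length l = m then {w. \<forall>i<m. w i = l ! i} else {})"
    unfolding space_lam3 by (simp only: vimage_def Int_UNIV_right singleton_iff map_upt_eq_iff) auto
  then show "(\<lambda>w. map w [0..<m]) -` {l} \<inter> space lam3 \<in> sets lam3"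
    using prefix_sets by simp
next
  show "(\<lambda>w. map w [0..<m]) \<in> space lam3 \<rightarrow> UNIV" by simp
qed

lemma Eset_sets: "Eset \<sigma> \<in> sets lam3"
proof -
  have "Eset \<sigma> = (\<Union>m. (\<lambda>w. map w [0..<m]) -` {l. filter (\<lambda>v. v \<noteq> 2) l = \<sigma>} \<inter> space lam3)"
    unfolding Eset_def filt_def by auto
  moreover have "(\<lambda>w. map w [0..<m]) -` {l. filter (\<lambda>v. v \<noteq> 2) l = \<sigma>} \<inter> space lam3 \<in> sets lam3" for m
    by (rule measurable_sets[OF meas_prefix]) simp
  ultimately show ?thesis using sets.countable_UN''[of UNIV] by simp
qed

definition Dset :: "nat \<Rightarrow> (nat \<Rightarrow> nat) set" where
  "Dset N = {w. \<forall>n\<ge>N. w n = 2}"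

lemma Dset_sets: "Dset N \<in> sets lam3"
proof -
  have "Dset N = (\<Inter>n\<in>{N..}. {w. w n = 2})" unfolding Dset_def by auto
  moreover have "(\<Inter>n\<in>{N..}. {w. w n = 2}) \<in> sets lam3"
    by (rule sets.countable_INT'') (simp_all add: single_sets sets.top[of lam3, simplified])
  ultimately show ?thesis by simp
qed

lemma Infs_eq: "Infs = - (\<Union>N. Dset N)"
  unfolding Infs_def Dset_def by auto

lemma Infs_sets: "Infs \<in> sets lam3"
proof -
  have "(\<Union>N. Dset N) \<in> sets lam3" by (rule sets.countable_UN'') (simp_all add: Dset_sets)
  then have "space lam3 - (\<Union>N. Dset N) \<in> sets lam3" by (rule sets.compl_sets)
  then show ?thesis unfolding Infs_eq by (simp add: Compl_eq_Diff_UNIV)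
qed



lemma map_case_nat_upt: "map (case_nat s \<omega>) [0..<Suc m] = s # map \<omega> [0..<m]"
proof -
  have "[0..<Suc m] = 0 # map Suc [0..<m]" by (simp add: map_Suc_upt upt_conv_Cons)
  then show ?thesis by simp
qed

lemma filt_case_nat: "filt (case_nat s \<omega>) (Suc m) = (if s = 2 then filt \<omega> m else s # filt \<omega> m)"
  unfolding filt_def map_case_nat_upt by simp

lemma filt_0: "filt w 0 = []" by (simp add: filt_def)

lemma Eset_nil: "Eset [] = UNIV"
  unfolding Eset_def using filt_0 by blast

lemma Eset_cons_iff: "case_nat s \<omega> \<in> Eset (b # \<sigma>) \<longleftrightarrow>
   (if s = 2 then \<omega> \<in> Eset (b # \<sigma>) else s = b \<and> \<omega> \<in> Eset \<sigma>)"
proof -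
  have "case_nat s \<omega> \<in> Eset (b # \<sigma>) \<longleftrightarrow> (\<exists>m. filt (case_nat s \<omega>) (Suc m) = b # \<sigma>)"
    unfolding Eset_def
  proof safe
    fix m assume "filt (case_nat s \<omega>) m = b # \<sigma>"
    then show "\<exists>m. filt (case_nat s \<omega>) (Suc m) = b # \<sigma>"
      by (cases m) (auto simp: filt_0)
  qed blast
  also have "\<dots> \<longleftrightarrow> (if s = 2 then \<omega> \<in> Eset (b # \<sigma>) else s = b \<and> \<omega> \<in> Eset \<sigma>)"
    unfolding filt_case_nat Eset_def by auto
  finally show ?thesis .
qed

lemma prob_Eset: "set \<sigma> \<subseteq> {0, 1} \<Longrightarrow> measure lam3 (Eset \<sigma>) = (1 / 2) ^ length \<sigma>"
proof (induction \<sigma>)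
  case Nil
  have "measure lam3 UNIV = 1"
    using prob_space.prob_space[OF prob_lam3] by simp
  then show ?case by (simp add: Eset_nil)
next
  case (Cons b \<sigma>)
  have b: "b = 0 \<or> b = 1" using Cons.prems by auto
  have IH: "measure lam3 (Eset \<sigma>) = (1 / 2) ^ length \<sigma>" using Cons by simp
  let ?p = "measure lam3 (Eset (b # \<sigma>))" and ?q = "measure lam3 (Eset \<sigma>)"
  have pre: "(\<lambda>\<omega>. case_nat s \<omega>) -` Eset (b # \<sigma>) =
      (if s = 2 then Eset (b # \<sigma>) else if s = b then Eset \<sigma> else {})" for s
    using Eset_cons_iff[of s _ b \<sigma>] by auto
  have "?p = (\<Sum>s\<in>{0,1,2::nat}. measure lam3 ((\<lambda>\<omega>. case_nat s \<omega>) -` Eset (b # \<sigma>))) / 3"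
    by (rule lam3_step[OF Eset_sets])
  also have "\<dots> = (?p + ?q) / 3"
    unfolding pre using b by auto
  finally have "?p = ?q / 2" by simp
  then show ?case using IH by simp
qed

lemma Dset_pre: "(\<lambda>\<omega>. case_nat s \<omega>) -` Dset (Suc N) = Dset N"
proof (rule set_eqI)
  fix \<omega> :: "nat \<Rightarrow> nat"
  show "\<omega> \<in> (\<lambda>\<omega>. case_nat s \<omega>) -` Dset (Suc N) \<longleftrightarrow> \<omega> \<in> Dset N"
    unfolding Dset_def vimage_def mem_Collect_eq
  proof
    assume h: "\<forall>n\<ge>Suc N. case_nat s \<omega> n = 2"
    show "\<forall>n\<ge>N. \<omega> n = 2"
    proof (intro allI impI)
      fix n assume "N \<le> n"
      then have "Suc N \<le> Suc n" by simp
      from h[rule_format, OF this] show "\<omega> n = 2" by simp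
    qed
  next
    assume h: "\<forall>n\<ge>N. \<omega> n = 2"
    show "\<forall>n\<ge>Suc N. case_nat s \<omega> n = 2"
    proof (intro allI impI)
      fix n assume "Suc N \<le> n"
      then obtain k where "n = Suc k" "N \<le> k" by (cases n) auto
      then show "case_nat s \<omega> n = 2" using h by simp
    qed
  qed
qed

lemma Dset0_pre: "(\<lambda>\<omega>. case_nat s \<omega>) -` Dset 0 = (if s = 2 then Dset 0 else {})"
proof -
  have "case_nat s \<omega> \<in> Dset 0 \<longleftrightarrow> s = 2 \<and> \<omega> \<in> Dset 0" for \<omega>
  proof
    assume h: "case_nat s \<omega> \<in> Dset 0"
    have "case_nat s \<omega> 0 = 2" using h unfolding Dset_def by blast
    then have "s = 2" by simp
    moreover have "\<omega> \<in> Dset 0" unfolding Dset_def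
    proof (intro CollectI allI impI)
      fix n :: nat
      have "case_nat s \<omega> (Suc n) = 2" using h unfolding Dset_def by blast
      then show "\<omega> n = 2" by simp
    qed
    ultimately show "s = 2 \<and> \<omega> \<in> Dset 0" by blast
  next
    assume h: "s = 2 \<and> \<omega> \<in> Dset 0"
    show "case_nat s \<omega> \<in> Dset 0" unfolding Dset_def
    proof (intro CollectI allI impI)
      fix n :: nat
      show "case_nat s \<omega> n = 2" using h unfolding Dset_def by (cases n) auto
    qed
  qed
  then show ?thesis by (cases "s = 2") auto
qed

lemma prob_Dset: "measure lam3 (Dset N) = 0"
proof (induction N)
  case 0
  let ?d = "measure lam3 (Dset 0)"
  have "?d = (\<Sum>s\<in>{0,1,2::nat}. measure lam3 ((\<lambda>\<omega>. case_nat s \<omega>) -` Dset 0)) / 3"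
    by (rule lam3_step[OF Dset_sets])
  also have "\<dots> = ?d / 3" unfolding Dset0_pre by simp
  finally show ?case by simp
next
  case (Suc N)
  have "measure lam3 (Dset (Suc N)) = (\<Sum>s\<in>{0,1,2::nat}. measure lam3 ((\<lambda>\<omega>. case_nat s \<omega>) -` Dset (Suc N))) / 3"
    by (rule lam3_step[OF Dset_sets])
  also have "\<dots> = 0" unfolding Dset_pre using Suc by simp
  finally show ?case .
qed

lemma prob_G: "set \<sigma> \<subseteq> {0, 1} \<Longrightarrow> measure lam3 (Eset \<sigma> \<inter> Infs) = (1 / 2) ^ length \<sigma>"
proof -
  assume a: "set \<sigma> \<subseteq> {0, 1}"
  have "Dset N \<in> null_sets lam3" for N
    using prob_Dset[of N] Dset_sets[of N] by (intro null_setsI) (simp add: em3)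
  then have nul: "(\<Union>N. Dset N) \<in> null_sets lam3" by blast
  have "Eset \<sigma> \<inter> Infs = Eset \<sigma> - (\<Union>N. Dset N)" unfolding Infs_eq by blast
  then have "measure lam3 (Eset \<sigma> \<inter> Infs) = measure lam3 (Eset \<sigma>)"
    using measure_Diff_null_set[OF Eset_sets nul] by simp
  then show ?thesis using prob_Eset[OF a] by simp
qed



lemma foldl_bound: "set xs \<subseteq> {0, 1} \<Longrightarrow> foldl (\<lambda>a b. 2 * a + b) (a::nat) xs < (a + 1) * 2 ^ length xs"
proof (induction xs arbitrary: a)
  case Nil then show ?case by simp
next
  case (Cons b xs)
  have b: "b \<le> 1" using Cons.prems by auto
  have "foldl (\<lambda>a b. 2 * a + b) a (b # xs) = foldl (\<lambda>a b. 2 * a + b) (2 * a + b) xs" by simp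
  also have "\<dots> < (2 * a + b + 1) * 2 ^ length xs" using Cons by simp
  also have "\<dots> \<le> (2 * (a + 1)) * 2 ^ length xs" using b by (intro mult_le_mono1) simp
  also have "\<dots> = (a + 1) * 2 ^ length (b # xs)" by simp
  finally show ?case .
qed

lemma idx_bounds:
  assumes "set \<tau> \<subseteq> {0, 1}"
  shows "2 ^ length \<tau> - 1 \<le> lenlex_index \<tau>" "lenlex_index \<tau> < 2 ^ Suc (length \<tau>) - 1"
proof -
  have v: "foldl (\<lambda>a b. 2 * a + b) 0 \<tau> < 2 ^ length \<tau>" using foldl_bound[OF assms, of 0] by simp
  show "2 ^ length \<tau> - 1 \<le> lenlex_index \<tau>" unfolding lenlex_index_def by simp
  have p: "(1::nat) \<le> 2 ^ length \<tau>" by simp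
  show "lenlex_index \<tau> < 2 ^ Suc (length \<tau>) - 1" unfolding lenlex_index_def using v p by simp
qed

definition gg :: "(nat \<Rightarrow> nat) \<Rightarrow> nat \<Rightarrow> nat" where
  "gg y n = lenlex_index (restr y (Suc n)) - 1"

lemma label_seq_gg: "label_seq x y = (\<lambda>n. x (gg y n))"
  unfolding label_seq_def label_def gg_def by simp

lemma gg_mono:
  assumes y: "\<forall>n. y n \<in> {0, 1}"
  shows "strict_mono (gg y)"
proof (rule strict_monoI_Suc)
  fix n
  have s: "set (restr y k) \<subseteq> {0, 1}" for k
  proof
    fix v assume "v \<in> set (restr y k)"
    then obtain i where "v = y i" by (auto simp: restr_def)
    then show "v \<in> {0, 1}" using y by simp
  qed
  have l: "length (restr y k) = k" for k by (simp add: restr_def)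
  have a: "lenlex_index (restr y (Suc n)) < 2 ^ Suc (Suc n) - 1"
    using idx_bounds(2)[OF s, of "Suc n"] l by simp
  have b: "2 ^ Suc (Suc n) - 1 \<le> lenlex_index (restr y (Suc (Suc n)))"
    using idx_bounds(1)[OF s, of "Suc (Suc n)"] l by simp
  have c: "1 \<le> lenlex_index (restr y (Suc n))"
  proof -
    have "(2::nat) \<le> 2 ^ Suc n" using power_increasing[of 1 "Suc n" "2::nat"] by simp
    then have "(2::nat) ^ Suc n - 1 \<ge> 1" by linarith
    then show ?thesis using idx_bounds(1)[OF s, of "Suc n"] l by simp
  qed
  show "gg y n < gg y (Suc n)" unfolding gg_def using a b c by simp
qed

lemma reindex_lam3:
  assumes "inj g"
  shows "distr lam3 lam3 (\<lambda>x n. x (g n)) = lam3"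
proof -
  have "distr (PiM UNIV (\<lambda>_. M3)) (PiM UNIV (\<lambda>i. M3)) (\<lambda>\<omega>. \<lambda>n\<in>UNIV. \<omega> (g n)) = (PiM UNIV (\<lambda>i. M3))"
    by (rule distr_PiM_reindex) (auto simp: assms prob_space_measure_pmf)
  then show ?thesis unfolding lam3_def by (simp add: restrict_def)
qed

lemma meas_reindex: "(\<lambda>x n. x (g n)) \<in> measurable lam3 lam3"
  unfolding lam3_def
  by (rule measurable_PiM_single'[where f="\<lambda>i x. x (g i)"])
     (auto intro: measurable_component_singleton simp: space_PiM)

lemma fiber:
  assumes y: "\<forall>n. y n \<in> {0, 1}" and G: "G \<in> sets lam3"
  shows "measure lam3 {x. label_seq x y \<in> G} = measure lam3 G"
proof -
  have inj: "inj (gg y)" using gg_mono[OF y] strict_mono_imp_inj_on by blast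
  have "{x. label_seq x y \<in> G} = (\<lambda>x n. x (gg y n)) -` G \<inter> space lam3"
    unfolding label_seq_gg by auto
  then have "measure lam3 {x. label_seq x y \<in> G} = measure (distr lam3 lam3 (\<lambda>x n. x (gg y n))) G"
    using measure_distr[OF meas_reindex G] by simp
  then show ?thesis using reindex_lam3[OF inj] by simp
qed



lemma sets_lam: "sets lam = sets lam3"
  unfolding lam_def lam3_def by (rule sets_PiM_cong) simp_all

lemma space_lam[simp]: "space lam = UNIV"
  by (simp add: lam_def space_PiM)

lemma prob_lam: "prob_space lam"
  unfolding lam_def by (intro prob_space_PiM) (simp add: prob_space_measure_pmf)

lemma sf_lam: "sigma_finite_measure lam"
  using prob_lam by (rule prob_space_imp_sigma_finite)

lemma em_lam: "emeasure lam A = ennreal (measure lam A)"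
proof -
  interpret L: prob_space lam by (rule prob_lam)
  show ?thesis by (rule L.emeasure_eq_measure)
qed

lemma meas_prefix_lam: "(\<lambda>w. map w [0..<m]) \<in> measurable lam (count_space UNIV)"
  using meas_prefix[of m] measurable_cong_sets[OF sets_lam refl] by blast

lemma meas_gg: "(\<lambda>y. gg y n) \<in> measurable lam (count_space UNIV)"
proof -
  have e: "(\<lambda>y. gg y n) = (\<lambda>y. (\<lambda>l. lenlex_index l - 1) (map y [0..<Suc n]))"
    by (simp add: gg_def restr_def)
  show ?thesis unfolding e
    by (rule measurable_compose[OF meas_prefix_lam measurable_count_space])
qed

lemma meas_comp3: "(\<lambda>x. x i) \<in> measurable lam3 M3"
  unfolding lam3_def by (rule measurable_component_singleton) simp

lemma meas_ls0: "(\<lambda>p n. fst p (gg (snd p) n)) \<in> measurable (lam3 \<Otimes>\<^sub>M lam) (PiM UNIV (\<lambda>_. M3))"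
proof (rule measurable_PiM_single'[where f="\<lambda>n p. fst p (gg (snd p) n)"])
  fix n :: nat
  show "(\<lambda>p. fst p (gg (snd p) n)) \<in> measurable (lam3 \<Otimes>\<^sub>M lam) M3"
  proof (rule measurable_compose_countable'[where f="\<lambda>i p. fst p i" and g="\<lambda>p. gg (snd p) n" and I=UNIV])
    fix i :: nat
    show "(\<lambda>p. fst p i) \<in> measurable (lam3 \<Otimes>\<^sub>M lam) M3"
      by (rule measurable_compose[OF measurable_fst meas_comp3])
  next
    show "(\<lambda>p. gg (snd p) n) \<in> measurable (lam3 \<Otimes>\<^sub>M lam) (count_space UNIV)"
      by (rule measurable_compose[OF measurable_snd meas_gg])
  qed simp
qed (simp add: space_PiM)

lemma meas_ls: "(\<lambda>p. label_seq (fst p) (snd p)) \<in> measurable (lam3 \<Otimes>\<^sub>M lam) lam3"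
  using meas_ls0 unfolding label_seq_gg lam3_def[symmetric] .

lemma AE_binary: "AE y in lam. \<forall>n. y n \<in> {0, 1}"
  unfolding lam_def AE_all_countable
proof
  fix n :: nat
  show "AE y in PiM UNIV (\<lambda>_. measure_pmf (pmf_of_set {0, 1 :: nat})). y n \<in> {0, 1}"
    by (rule AE_PiM_component) (simp_all add: prob_space_measure_pmf AE_measure_pmf_iff)
qed



theorem lemma6p1:
  fixes \<sigma> :: "nat list"
  assumes "set \<sigma> \<subseteq> {0, 1}"
  shows "(\<integral>x. measure lam (F_preimage x (cyl \<sigma>)) \<partial>lam3) = (1 / 2) ^ length \<sigma>"
proof -
  define G where "G = Eset \<sigma> \<inter> Infs"
  define Q where "Q = (\<lambda>p. label_seq (fst p) (snd p)) -` G \<inter> space (lam3 \<Otimes>\<^sub>M lam)"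
  define c :: real where "c = (1 / 2) ^ length \<sigma>"
  have Gs: "G \<in> sets lam3" unfolding G_def using Eset_sets Infs_sets by blast
  have Qs: "Q \<in> sets (lam3 \<Otimes>\<^sub>M lam)" unfolding Q_def by (rule measurable_sets[OF meas_ls Gs])
  have Qmem: "(x, y) \<in> Q \<longleftrightarrow> label_seq x y \<in> G" for x y
    unfolding Q_def by (simp add: space_pair_measure)
  have Fpre: "F_preimage x (cyl \<sigma>) = Pair x -` Q" for x
    unfolding F_preimage_def using Qmem F_char unfolding G_def by auto
  have meas: "(\<lambda>x. measure lam (Pair x -` Q)) \<in> borel_measurable lam3"
  proof -
    have "(\<lambda>x. emeasure lam (Pair x -` Q)) \<in> borel_measurable lam3"
      by (rule sigma_finite_measure.measurable_emeasure_Pair[OF sf_lam Qs])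
    then have "(\<lambda>x. enn2real (emeasure lam (Pair x -` Q))) \<in> borel_measurable lam3"
      by (rule borel_measurable_enn2real)
    then show ?thesis by (simp add: measure_def)
  qed
  have psf: "pair_sigma_finite lam3 lam"
    unfolding pair_sigma_finite_def using sf_lam3 sf_lam by blast
  have fib: "AE y in lam. emeasure lam3 ((\<lambda>x. (x, y)) -` Q) = ennreal c"
    using AE_binary
  proof (rule AE_mp, intro AE_I2 impI)
    fix y :: "nat \<Rightarrow> nat" assume y: "\<forall>n. y n \<in> {0, 1}"
    have "(\<lambda>x. (x, y)) -` Q = {x. label_seq x y \<in> G}" using Qmem by auto
    then have "emeasure lam3 ((\<lambda>x. (x, y)) -` Q) = ennreal (measure lam3 G)"
      using fiber[OF y Gs] by (simp add: em3)
    also have "measure lam3 G = c" unfolding G_def c_def by (rule prob_G[OF assms])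
    finally show "emeasure lam3 ((\<lambda>x. (x, y)) -` Q) = ennreal c" .
  qed
  have "(\<integral>x. measure lam (F_preimage x (cyl \<sigma>)) \<partial>lam3) = (\<integral>x. measure lam (Pair x -` Q) \<partial>lam3)"
    by (simp add: Fpre)
  also have "\<dots> = enn2real (\<integral>\<^sup>+x. ennreal (measure lam (Pair x -` Q)) \<partial>lam3)"
    by (rule integral_eq_nn_integral[OF meas]) simp
  also have "(\<integral>\<^sup>+x. ennreal (measure lam (Pair x -` Q)) \<partial>lam3) = (\<integral>\<^sup>+x. emeasure lam (Pair x -` Q) \<partial>lam3)"
    by (simp add: em_lam)
  also have "\<dots> = emeasure (lam3 \<Otimes>\<^sub>M lam) Q"
    by (rule sigma_finite_measure.emeasure_pair_measure_alt[OF sf_lam Qs, symmetric])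
  also have "\<dots> = (\<integral>\<^sup>+y. emeasure lam3 ((\<lambda>x. (x, y)) -` Q) \<partial>lam)"
    by (rule pair_sigma_finite.emeasure_pair_measure_alt2[OF psf Qs])
  also have "\<dots> = (\<integral>\<^sup>+y. ennreal c \<partial>lam)"
    by (rule nn_integral_cong_AE[OF fib])
  also have "\<dots> = ennreal c"
  proof -
    interpret L: prob_space lam by (rule prob_lam)
    have "emeasure lam UNIV = 1" using L.emeasure_space_1 by simp
    then show ?thesis by simp
  qed
  finally show ?thesis unfolding c_def by simp
qed


end
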